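(* Let $\{\alpha_i\}_{i=1}^N$ be an optimal solution of $$\hat{\mathcal{P}}_1:\ \min_{\{\alpha_i\}}\ \sum_{n=1}^N (1-\alpha_n)c_n\quad\text{s.t.}\quad \sum_{k=1}^{i}\alpha_k p^{inv}_{H,k}\tau\le\sum_{l=1}^{i}E_{H,l},\ \ \alpha_i p^{inv}_{H,i}\le p_H^{\max},\ \ \alpha_i\in\{0,1\},\ \ \forall i\in\{1,\dots,N\}.$$ Then there do not exist indices $i<j$ such that $\alpha_i=1$, $\alpha_j=0$, $c_i<c_j$ and $p^{inv}_{H,i}\ge p^{inv}_{H,j}$.
   Context: Data: $N$, $\tau>0$, $E_{H,i}\ge0$, channel gains $h_{G,i},h_{H,i}>0$, $p_G^{\max},p_H^{\max}>0$, $R,W,\sigma^2>0$, weights $w_G,w_D>0$. $p^{inv}_{j,i}=(2^{R/(W\tau)}-1)\sigma^2 h_{j,i}^{-1}$ for $j\in\{G,H\}$, $\kappa=\min\{p_G^{\max},w_D(w_G\tau)^{-1}\}$, and $c_i=w_D$ if $p^{inv}_{G,i}>\kappa$, $c_i=w_G p^{inv}_{G,i}\tau$ otherwise. *)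

theory Defs
  imports Complex_Main
begin

definition p_inv :: "real \<Rightarrow> real \<Rightarrow> real \<Rightarrow> real \<Rightarrow> real \<Rightarrow> real" where
  "p_inv R W \<tau> \<sigma>2 h = (2 powr (R / (W * \<tau>)) - 1) * \<sigma>2 / h"

definition kappa :: "real \<Rightarrow> real \<Rightarrow> real \<Rightarrow> real \<Rightarrow> real" where
  "kappa pGmax wD wG \<tau> = min pGmax (wD / (wG * \<tau>))"

definition cost_coef :: "real \<Rightarrow> real \<Rightarrow> real \<Rightarrow> real \<Rightarrow> real \<Rightarrow> real" where
  "cost_coef pG pGmax wD wG \<tau> =
     (if pG > kappa pGmax wD wG \<tau> then wD else wG * pG * \<tau>)"

definition feasible_P1 ::
  "nat \<Rightarrow> real \<Rightarrow> (nat \<Rightarrow> real) \<Rightarrow> (nat \<Rightarrow> real) \<Rightarrow> real \<Rightarrow> (nat \<Rightarrow> real) \<Rightarrow> bool" where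
  "feasible_P1 N \<tau> pH E pHmax \<alpha> \<longleftrightarrow>
     (\<forall>i\<in>{1..N}.
        (\<Sum>k=1..i. \<alpha> k * pH k * \<tau>) \<le> (\<Sum>l=1..i. E l)
      \<and> \<alpha> i * pH i \<le> pHmax
      \<and> \<alpha> i \<in> {0, 1})"

definition objective_P1 :: "nat \<Rightarrow> (nat \<Rightarrow> real) \<Rightarrow> (nat \<Rightarrow> real) \<Rightarrow> real" where
  "objective_P1 N c \<alpha> = (\<Sum>n=1..N. (1 - \<alpha> n) * c n)"

definition optimal_P1 ::
  "nat \<Rightarrow> real \<Rightarrow> (nat \<Rightarrow> real) \<Rightarrow> (nat \<Rightarrow> real) \<Rightarrow> real \<Rightarrow> (nat \<Rightarrow> real) \<Rightarrow> (nat \<Rightarrow> real) \<Rightarrow> bool" where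
  "optimal_P1 N \<tau> pH E pHmax c \<alpha> \<longleftrightarrow>
     feasible_P1 N \<tau> pH E pHmax \<alpha> \<and>
     (\<forall>\<beta>. feasible_P1 N \<tau> pH E pHmax \<beta> \<longrightarrow> objective_P1 N c \<alpha> \<le> objective_P1 N c \<beta>)"

end

theory Submission
  imports Defs
begin

lemma p_inv_pos:
  assumes "R > 0" "W > 0" "\<tau> > 0" "\<sigma>2 > 0" "h > 0"
  shows "p_inv R W \<tau> \<sigma>2 h > 0"
proof -
  have "R / (W * \<tau>) > 0" using assms by simp
  hence "2 powr (R / (W * \<tau>)) > 1" by (simp add: powr_gt_zero less_powr_iff)
  thus ?thesis using assms unfolding p_inv_def by simp
qed

lemma delta_sum:
  fixes i j n :: nat and a b :: real
  assumes "i < j"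
  shows "(\<Sum>k=1..n. (if k = i then a else if k = j then b else 0))
         = (if 1 \<le> i \<and> i \<le> n then a else 0) + (if 1 \<le> j \<and> j \<le> n then b else 0)"
proof -
  have "(\<Sum>k=1..n. (if k = i then a else if k = j then b else 0))
      = (\<Sum>k=1..n. (if k = i then a else 0)) + (\<Sum>k=1..n. (if k = j then b else 0))"
    by (subst sum.distrib[symmetric]) (rule sum.cong, use assms in \<open>auto simp: less_irrefl\<close>)
  also have "\<dots> = (if 1 \<le> i \<and> i \<le> n then a else 0) + (if 1 \<le> j \<and> j \<le> n then b else 0)"
    by (simp add: sum.delta)
  finally show ?thesis .
qed

theorem proposition1:
  fixes N :: nat and \<tau> R W \<sigma>2 pGmax pHmax wG wD :: real
    and EH hG hH \<alpha> :: "nat \<Rightarrow> real"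
  assumes "\<tau> > 0" and "\<And>i. i \<in> {1..N} \<Longrightarrow> EH i \<ge> 0"
    and "\<And>i. i \<in> {1..N} \<Longrightarrow> hG i > 0" and "\<And>i. i \<in> {1..N} \<Longrightarrow> hH i > 0"
    and "pGmax > 0" and "pHmax > 0" and "R > 0" and "W > 0" and "\<sigma>2 > 0"
    and "wG > 0" and "wD > 0"
    and opt: "optimal_P1 N \<tau> (\<lambda>i. p_inv R W \<tau> \<sigma>2 (hH i)) EH pHmax
                (\<lambda>i. cost_coef (p_inv R W \<tau> \<sigma>2 (hG i)) pGmax wD wG \<tau>) \<alpha>"
  shows "\<not> (\<exists>i j. 1 \<le> i \<and> i < j \<and> j \<le> N \<and> \<alpha> i = 1 \<and> \<alpha> j = 0
              \<and> cost_coef (p_inv R W \<tau> \<sigma>2 (hG i)) pGmax wD wG \<tau>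
                  < cost_coef (p_inv R W \<tau> \<sigma>2 (hG j)) pGmax wD wG \<tau>
              \<and> p_inv R W \<tau> \<sigma>2 (hH i) \<ge> p_inv R W \<tau> \<sigma>2 (hH j))"
proof
  assume "\<exists>i j. 1 \<le> i \<and> i < j \<and> j \<le> N \<and> \<alpha> i = 1 \<and> \<alpha> j = 0
              \<and> cost_coef (p_inv R W \<tau> \<sigma>2 (hG i)) pGmax wD wG \<tau>
                  < cost_coef (p_inv R W \<tau> \<sigma>2 (hG j)) pGmax wD wG \<tau>
              \<and> p_inv R W \<tau> \<sigma>2 (hH i) \<ge> p_inv R W \<tau> \<sigma>2 (hH j)"
  then obtain i j where ij: "1 \<le> i" "i < j" "j \<le> N" "\<alpha> i = 1" "\<alpha> j = 0"
    and cl: "cost_coef (p_inv R W \<tau> \<sigma>2 (hG i)) pGmax wD wG \<tau>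
                  < cost_coef (p_inv R W \<tau> \<sigma>2 (hG j)) pGmax wD wG \<tau>"
    and pl: "p_inv R W \<tau> \<sigma>2 (hH i) \<ge> p_inv R W \<tau> \<sigma>2 (hH j)" by blast
  define pH where "pH = (\<lambda>i. p_inv R W \<tau> \<sigma>2 (hH i))"
  define c where "c = (\<lambda>i. cost_coef (p_inv R W \<tau> \<sigma>2 (hG i)) pGmax wD wG \<tau>)"
  define \<beta> where "\<beta> = \<alpha>(i := 0, j := 1)"
  have feas: "feasible_P1 N \<tau> pH EH pHmax \<alpha>" and
    le: "\<And>\<gamma>. feasible_P1 N \<tau> pH EH pHmax \<gamma> \<Longrightarrow> objective_P1 N c \<alpha> \<le> objective_P1 N c \<gamma>"
    using opt unfolding optimal_P1_def pH_def c_def by auto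
  have pHi: "pH i > 0" using p_inv_pos[OF \<open>R>0\<close> \<open>W>0\<close> \<open>\<tau>>0\<close> \<open>\<sigma>2>0\<close>] assms(4) ij
    unfolding pH_def by auto
  have ij': "i \<noteq> j" using ij by simp
  have bdec: "\<And>k. \<beta> k * pH k * \<tau> = \<alpha> k * pH k * \<tau> +
      (if k = i then - (pH i * \<tau>) else if k = j then pH j * \<tau> else 0)"
    using ij unfolding \<beta>_def by auto
  have bsum: "\<And>n. (\<Sum>k=1..n. \<beta> k * pH k * \<tau>) \<le> (\<Sum>k=1..n. \<alpha> k * pH k * \<tau>)"
  proof -
    fix n
    have "(\<Sum>k=1..n. \<beta> k * pH k * \<tau>) = (\<Sum>k=1..n. \<alpha> k * pH k * \<tau>) +
      ((if 1 \<le> i \<and> i \<le> n then - (pH i * \<tau>) else 0) + (if 1 \<le> j \<and> j \<le> n then pH j * \<tau> else 0))"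
      by (simp only: bdec sum.distrib delta_sum[OF ij(2)])
    moreover have "(if 1 \<le> i \<and> i \<le> n then - (pH i * \<tau>) else 0) + (if 1 \<le> j \<and> j \<le> n then pH j * \<tau> else 0) \<le> 0"
    proof -
      have "pH j * \<tau> \<le> pH i * \<tau>" using pl \<open>\<tau>>0\<close> unfolding pH_def by simp
      moreover have "pH i * \<tau> \<ge> 0" using pHi \<open>\<tau>>0\<close> by simp
      ultimately show ?thesis using ij by auto
    qed
    ultimately show "(\<Sum>k=1..n. \<beta> k * pH k * \<tau>) \<le> (\<Sum>k=1..n. \<alpha> k * pH k * \<tau>)" by linarith
  qed
  have "feasible_P1 N \<tau> pH EH pHmax \<beta>"
    unfolding feasible_P1_def
  proof
    fix k assume k: "k \<in> {1..N}"
    have a: "(\<Sum>k=1..k. \<alpha> k * pH k * \<tau>) \<le> (\<Sum>l=1..k. EH l)" "\<alpha> k * pH k \<le> pHmax" "\<alpha> k \<in> {0,1}"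
      using feas k unfolding feasible_P1_def by auto
    have iN: "i \<in> {1..N}" using ij by auto
    have ai: "\<alpha> i * pH i \<le> pHmax" using feas iN unfolding feasible_P1_def by auto
    show "(\<Sum>k=1..k. \<beta> k * pH k * \<tau>) \<le> (\<Sum>l=1..k. EH l) \<and> \<beta> k * pH k \<le> pHmax \<and> \<beta> k \<in> {0, 1}"
    proof (intro conjI)
      show "(\<Sum>k=1..k. \<beta> k * pH k * \<tau>) \<le> (\<Sum>l=1..k. EH l)" using bsum[of k] a(1) by linarith
      show "\<beta> k * pH k \<le> pHmax"
        using a(2) ai ij pl pHi unfolding \<beta>_def pH_def by auto
      show "\<beta> k \<in> {0,1}" using a(3) unfolding \<beta>_def by auto
    qed
  qed
  hence "objective_P1 N c \<alpha> \<le> objective_P1 N c \<beta>" by (rule le)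
  moreover have "objective_P1 N c \<beta> = objective_P1 N c \<alpha> + c i - c j"
  proof -
    have "\<And>n. (1 - \<beta> n) * c n = (1 - \<alpha> n) * c n +
      (if n = i then c i else if n = j then - c j else 0)"
      using ij unfolding \<beta>_def by auto
    hence "objective_P1 N c \<beta> = objective_P1 N c \<alpha> +
      ((if 1 \<le> i \<and> i \<le> N then c i else 0) + (if 1 \<le> j \<and> j \<le> N then - c j else 0))"
      unfolding objective_P1_def by (simp only: sum.distrib delta_sum[OF ij(2)])
    thus ?thesis using ij by simp
  qed
  moreover have "c i < c j" using cl unfolding c_def .
  ultimately show False by linarith
qed

end
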